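(* Let $d\ge 1$ be an integer and let $F^{A_2}_{d}(x,y)\in\mathbb{R}[x,y]$ be the folding polynomial associated to the root system $A_2$ (defined in the context). Define the real folding polynomial $$F^{A_2}_{\mathbb{R},d}(x,y) := F^{A_2}_{d}(x+iy,\ x-iy),$$ where $i=\sqrt{-1}$; it has real coefficients. Then $F^{A_2}_{\mathbb{R},d}$ has exactly $\binom{d}{2}$ real critical points with critical value $0$, and it has $$\tfrac{1}{3}d^2-d \ \text{ real critical points with critical value } -1 \text{ if } d\equiv 0 \pmod 3,\qquad \tfrac{1}{3}d^2-d+\tfrac{2}{3} \ \text{ otherwise}.$$ All other critical points of $F^{A_2}_{\mathbb{R},d}$ also have real coordinates and have critical value $8$.
   Context: The folding polynomial $F^{A_2}_d(x,y)$ is defined by $F^{A_2}_d(x,y) := 2+\det A_d(x,y)+\det A_d(y,x)$, where $A_d(x,y)$ is the $d\times d$ matrix with entries: $(A_d)_{j,j}=x$ for all $j$; $(A_d)_{j,j+1}=1$ for all $j$; $(A_d)_{2,1}=2y$ and $(A_d)_{j+1,j}=y$ for $j\ge 2$; $(A_d)_{3,1}=3$ and $(A_d)_{j+2,j}=1$ for $j\ge 2$; all other entries $0$. (So the first column is $(x,2y,3,0,\dots,0)^T$, and $A_d(y,x)$ is obtained by interchanging the roles of $x$ and $y$.) A critical point of a polynomial $f\in\mathbb{R}[x,y]$ is a point where both partial derivatives vanish; its critical value is the value of $f$ there. *)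

theory Defs
  imports Complex_Main "Jordan_Normal_Form.Determinant"
begin

text \<open>The d x d matrix A_d(x,y), 0-based indices: row i, column j.\<close>
definition A_mat :: "nat \<Rightarrow> complex \<Rightarrow> complex \<Rightarrow> complex mat" where
  "A_mat d x y = mat d d (\<lambda>(i, j).
     if i = j then x
     else if j = i + 1 then 1
     else if i = 1 \<and> j = 0 then 2 * y
     else if i = j + 1 \<and> j \<ge> 1 then y
     else if i = 2 \<and> j = 0 then 3
     else if i = j + 2 \<and> j \<ge> 1 then 1
     else 0)"

definition folding_A2 :: "nat \<Rightarrow> complex \<Rightarrow> complex \<Rightarrow> complex" where
  "folding_A2 d x y = 2 + det (A_mat d x y) + det (A_mat d y x)"

definition folding_A2_R :: "nat \<Rightarrow> complex \<Rightarrow> complex \<Rightarrow> complex" where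
  "folding_A2_R d x y = folding_A2 d (x + \<i> * y) (x - \<i> * y)"

definition crit_points :: "(complex \<Rightarrow> complex \<Rightarrow> complex) \<Rightarrow> (complex \<times> complex) set" where
  "crit_points f = {(x, y). ((\<lambda>t. f t y) has_field_derivative 0) (at x) \<and>
                            ((\<lambda>t. f x t) has_field_derivative 0) (at y)}"

end

theory Submission imports Defs "HOL-Computational_Algebra.Fundamental_Theorem_Algebra" begin

lemma hess_minor:
  fixes M :: "'a::idom mat"
  assumes M: "M \<in> carrier_mat (Suc n) (Suc n)"
    and up: "\<And>i j. i < Suc n \<Longrightarrow> j < Suc n \<Longrightarrow> Suc i < j \<Longrightarrow> M$$(i,j) = 0"
    and sd: "\<And>i. i < n \<Longrightarrow> M$$(i, Suc i) = 1"
    and j: "j \<le> n"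
  shows "det (mat_delete M n j) = det (mat j j (($$) M))"
proof -
  define A1 where "A1 = mat j j (($$) M)"
  define A3 where "A3 = mat (n-j) j (\<lambda>(a,b). M$$(a+j,b))"
  define A4 where "A4 = mat (n-j) (n-j) (\<lambda>(a,b). M$$(a+j,b+j+1))"
  have eq: "mat_delete M n j = four_block_mat A1 (0\<^sub>m j (n-j)) A3 A4"
  proof (rule eq_matI)
    fix a b assume a: "a < dim_row (four_block_mat A1 (0\<^sub>m j (n-j)) A3 A4)"
      and b: "b < dim_col (four_block_mat A1 (0\<^sub>m j (n-j)) A3 A4)"
    have a': "a < n" and b': "b < n" using a b j by (auto simp: A1_def A4_def)
    show "mat_delete M n j $$ (a, b) = four_block_mat A1 (0\<^sub>m j (n-j)) A3 A4 $$ (a, b)"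
      using a' b' j M up[of a "Suc b"]
      by (auto simp: mat_delete_def A1_def A3_def A4_def)
  qed (use M j in \<open>auto simp: A1_def A4_def\<close>)
  have "det A4 = prod_list (diag_mat A4)"
    by (rule det_lower_triangular[of "n-j"]) (use up j in \<open>auto simp: A4_def\<close>)
  also have "\<dots> = 1"
  proof -
    have "diag_mat A4 = map (\<lambda>i. 1) [0..<n-j]"
      unfolding diag_mat_def using sd j by (auto simp: A4_def intro!: map_cong)
    thus ?thesis by (simp add: prod_list_zero_iff map_replicate_const)
  qed
  finally have d4: "det A4 = 1" .
  have "det (mat_delete M n j) = det A1 * det A4"
    unfolding eq by (rule det_four_block_mat_upper_right_zero) (auto simp: A1_def A3_def A4_def)
  thus ?thesis using d4 by (simp add: A1_def)
qed

lemma hess_det: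
  fixes M :: "'a::idom mat"
  assumes M: "M \<in> carrier_mat (Suc n) (Suc n)"
    and up: "\<And>i j. i < Suc n \<Longrightarrow> j < Suc n \<Longrightarrow> Suc i < j \<Longrightarrow> M$$(i,j) = 0"
    and sd: "\<And>i. i < n \<Longrightarrow> M$$(i, Suc i) = 1"
  shows "det M = (\<Sum>j<Suc n. M$$(n,j) * ((-1)^(n+j) * det (mat j j (($$) M))))"
proof -
  have h: "det (mat_delete M n j) = det (mat j j (($$) M))" if "j \<le> n" for j
    using hess_minor[OF assms that] by simp
  show ?thesis
    unfolding laplace_expansion_row[OF M lessI] cofactor_def
    using h by (intro sum.cong) auto
qed

lemma lead_A: "j \<le> d \<Longrightarrow> mat j j (($$) (A_mat d x y)) = A_mat j x y"
  by (rule eq_matI) (auto simp: A_mat_def)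

lemma det_A_rec: "det (A_mat (Suc n) x y) =
   (\<Sum>j<Suc n. A_mat (Suc n) x y $$(n,j) * ((-1)^(n+j) * det (A_mat j x y)))"
proof -
  have "det (A_mat (Suc n) x y) = (\<Sum>j<Suc n. A_mat (Suc n) x y $$(n,j) *
     ((-1)^(n+j) * det (mat j j (($$) (A_mat (Suc n) x y)))))"
    by (rule hess_det) (auto simp: A_mat_def)
  also have "\<dots> = (\<Sum>j<Suc n. A_mat (Suc n) x y $$(n,j) * ((-1)^(n+j) * det (A_mat j x y)))"
    by (intro sum.cong refl) (simp add: lead_A)
  finally show ?thesis .
qed

fun P :: "nat \<Rightarrow> complex \<Rightarrow> complex \<Rightarrow> complex" where
  "P 0 x y = 3"
| "P (Suc 0) x y = x"
| "P (Suc (Suc 0)) x y = x^2 - 2*y"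
| "P (Suc (Suc (Suc n))) x y = x * P (Suc (Suc n)) x y - y * P (Suc n) x y + P n x y"

lemma A_idx: "i < n \<Longrightarrow> j < n \<Longrightarrow> A_mat n x y $$ (i,j) = (if i = j then x
     else if j = i + 1 then 1
     else if i = 1 \<and> j = 0 then 2 * y
     else if i = j + 1 \<and> j \<ge> 1 then y
     else if i = 2 \<and> j = 0 then 3
     else if i = j + 2 \<and> j \<ge> 1 then 1
     else 0)" by (simp add: A_mat_def)

lemma det_A0: "det (A_mat 0 x y) = 1"
  by (rule det_dim_zero) (simp add: A_mat_def)

lemma det_A_P: "n \<ge> 1 \<Longrightarrow> det (A_mat n x y) = P n x y"
proof (induction n rule: less_induct)
  case (less n)
  consider "n = 1" | "n = 2" | "n = 3" | m where "n = m + 4"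
    using less.prems by (metis Suc_eq_plus1 add_2_eq_Suc' add_Suc_right le_Suc_eq le_add_diff_inverse2
        nat_le_linear numeral_Bit0 numeral_Bit1 numeral_One one_add_one not_less_eq_eq)
  then show ?case
  proof cases
    case 1
    then show ?thesis by (simp add: det_A_rec[of 0] det_A0 A_idx)
  next
    case 2
    have "det (A_mat 1 x y) = x" using less.IH[of 1] 2 by simp
    have "det (A_mat (Suc 1) x y) = x^2 - 2*y"
      apply (subst det_A_rec)
      using \<open>det (A_mat 1 x y) = x\<close> by (simp add: det_A0 A_idx power2_eq_square)
    then show ?thesis using 2 by (simp add: numeral_2_eq_2)
  next
    case 3
    have h1: "det (A_mat 1 x y) = x" using less.IH[of 1] 3 by simp
    have h2: "det (A_mat (Suc (Suc 0)) x y) = x^2 - 2*y" using less.IH[of 2] 3 by (simp add: numeral_2_eq_2)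
    have "det (A_mat (Suc 2) x y) = x^3 - 3*x*y + 3"
      apply (subst det_A_rec)
      using h1 h2 apply (simp add: det_A0 A_idx numeral_2_eq_2 eval_nat_numeral del: mult_minus_left)
      by (simp add: algebra_simps power2_eq_square power3_eq_cube)
    then show ?thesis using 3 by (simp add: eval_nat_numeral algebra_simps power2_eq_square)
  next
    case 4
    have row: "A_mat (m+4) x y $$ (m+3, j) = (if j = m+3 then x else if j = m+2 then y
        else if j = m+1 then 1 else 0)" if "j < m + 4" for j
      using that by (auto simp: A_mat_def)
    have "det (A_mat (Suc (m+3)) x y) = (\<Sum>j<Suc (m+3). A_mat (m+4) x y $$(m+3,j) * ((-1)^(m+3+j) * det (A_mat j x y)))"
      by (subst det_A_rec) (simp add: add.commute)
    also have "\<dots> = x * det (A_mat (m+3) x y) - y * det (A_mat (m+2) x y) + det (A_mat (m+1) x y)"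
    proof -
      define f where "f j = A_mat (m+4) x y $$(m+3,j) * ((-1)^(m+3+j) * det (A_mat j x y))" for j
      have split: "(\<Sum>j<Suc (m+3). f j) = (\<Sum>j<m. f j) + f m + f (m+1) + f (m+2) + f (m+3)"
        by (simp add: eval_nat_numeral)
      have z: "(\<Sum>j<m. f j) = 0" by (rule sum.neutral) (auto simp: f_def row)
      have fm: "f m = 0" by (simp add: f_def row)
      have f1: "f (m+1) = det (A_mat (m+1) x y)"
        by (simp add: f_def row power_add flip: mult_2 add: power_mult)
      have f2: "f (m+2) = - y * det (A_mat (m+2) x y)"
        by (simp add: f_def row power_add flip: mult_2 add: power_mult)
      have f3: "f (m+3) = x * det (A_mat (m+3) x y)"
        by (simp add: f_def row power_add flip: mult_2 add: power_mult)
      show ?thesis unfolding f_def[symmetric] split z fm f1 f2 f3 by simp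
    qed
    also have "\<dots> = P (m+4) x y"
      using less.IH[of "m+3"] less.IH[of "m+2"] less.IH[of "m+1"] 4
      by (simp add: eval_nat_numeral)
    finally show ?thesis using 4 by (simp add: eval_nat_numeral)
  qed
qed

lemma three_induct:
  assumes "Q 0" "Q 1" "Q 2" "\<And>n. Q n \<Longrightarrow> Q (Suc n) \<Longrightarrow> Q (Suc (Suc n)) \<Longrightarrow> Q (Suc (Suc (Suc n)))"
  shows "Q n"
proof (induction n rule: less_induct)
  case (less n)
  show ?case
  proof (cases n)
    case 0 then show ?thesis using assms by simp
  next
    case (Suc k) note k = this
    show ?thesis
    proof (cases k)
      case 0 then show ?thesis using assms k by simp
    next
      case (Suc l) note l = this
      show ?thesis
      proof (cases l)
        case 0 then show ?thesis using assms k l by (simp add: numeral_2_eq_2)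
      next
        case (Suc r) then show ?thesis using assms(4)[of r] less k l by simp
      qed
    qed
  qed
qed

fun G :: "nat \<Rightarrow> complex \<Rightarrow> complex \<Rightarrow> complex" where
  "G 0 x y = 0"
| "G (Suc 0) x y = 0"
| "G (Suc (Suc 0)) x y = 1"
| "G (Suc (Suc (Suc n))) x y = x * G (Suc (Suc n)) x y - y * G (Suc n) x y + G n x y"

lemma PG: "P (Suc m) x y = x * G (Suc (Suc m)) x y - 2*y*G (Suc m) x y + 3 * G m x y"
proof (induction m rule: three_induct)
  case 1 show ?case by simp
next
  case 2 show ?case by (simp add: numeral_2_eq_2 power2_eq_square algebra_simps)
next
  case 3 show ?case by (simp add: numeral_2_eq_2 power2_eq_square algebra_simps)
next
  case (4 n)
  show ?case
    apply (simp only: P.simps(4)[of "Suc n"] 4)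
    apply (simp only: G.simps(4)[of "Suc (Suc n)"] G.simps(4)[of "Suc n"] G.simps(4)[of n])
    by (simp add: algebra_simps)
qed

lemma P_deriv:
  assumes da: "(a has_field_derivative a') (at t)" and db: "(b has_field_derivative b') (at t)"
  shows "((\<lambda>s. P n (a s) (b s)) has_field_derivative
     (of_nat n * (G (Suc n) (a t) (b t) * a' - G n (a t) (b t) * b'))) (at t)"
proof (induction n rule: three_induct)
  case 1 show ?case by simp
next
  case 2 show ?case using da by simp
next
  case 3
  have "((\<lambda>s. (a s)^2 - 2 * b s) has_field_derivative (2 * a t * a' - 2 * b')) (at t)"
    using da db by (auto intro!: derivative_eq_intros)
  then show ?case by (simp add: numeral_2_eq_2 algebra_simps)
next
  case (4 n)
  let ?g = "\<lambda>k. G k (a t) (b t)"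
  have D: "((\<lambda>s. a s * P (Suc (Suc n)) (a s) (b s) - b s * P (Suc n) (a s) (b s) + P n (a s) (b s))
     has_field_derivative
     (a t * (of_nat (Suc (Suc n)) * (?g (Suc (Suc (Suc n))) * a' - ?g (Suc (Suc n)) * b')) + a' * P (Suc (Suc n)) (a t) (b t)
      - (b t * (of_nat (Suc n) * (?g (Suc (Suc n)) * a' - ?g (Suc n) * b')) + b' * P (Suc n) (a t) (b t))
      + of_nat n * (?g (Suc n) * a' - ?g n * b'))) (at t)"
    by (intro DERIV_add DERIV_diff DERIV_mult' 4 da db)
  have eq: "a t * (of_nat (Suc (Suc n)) * (?g (Suc (Suc (Suc n))) * a' - ?g (Suc (Suc n)) * b')) + a' * P (Suc (Suc n)) (a t) (b t)
      - (b t * (of_nat (Suc n) * (?g (Suc (Suc n)) * a' - ?g (Suc n) * b')) + b' * P (Suc n) (a t) (b t))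
      + of_nat n * (?g (Suc n) * a' - ?g n * b') =
      of_nat (Suc (Suc (Suc n))) * (?g (Suc (Suc (Suc (Suc n)))) * a' - ?g (Suc (Suc (Suc n))) * b')"
    apply (simp only: PG G.simps(4)[of "Suc n"] G.simps(4)[of n])
    by (simp add: algebra_simps)
  show ?case using DERIV_cong[OF D eq] by simp
qed

definition AA :: "nat \<Rightarrow> complex \<Rightarrow> complex \<Rightarrow> complex" where
  "AA d X Y = G (Suc d) X Y - G d Y X"

lemma FR_eq: "d \<ge> 1 \<Longrightarrow> folding_A2_R d x y =
   2 + P d (x + \<i>*y) (x - \<i>*y) + P d (x - \<i>*y) (x + \<i>*y)"
  by (simp add: folding_A2_R_def folding_A2_def det_A_P)

lemma FR_dx:
  assumes d: "d \<ge> 1"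
  shows "((\<lambda>t. folding_A2_R d t y) has_field_derivative
     of_nat d * (AA d (x + \<i>*y) (x - \<i>*y) + AA d (x - \<i>*y) (x + \<i>*y))) (at x)"
proof -
  have f: "(\<lambda>t. folding_A2_R d t y) = (\<lambda>t. 2 + P d (t + \<i>*y) (t - \<i>*y) + P d (t - \<i>*y) (t + \<i>*y))"
    using FR_eq[OF d] by auto
  have da: "((\<lambda>t. t + \<i>*y) has_field_derivative 1) (at x)"
    by (auto intro!: derivative_eq_intros)
  have db: "((\<lambda>t. t - \<i>*y) has_field_derivative 1) (at x)"
    by (auto intro!: derivative_eq_intros)
  have D: "((\<lambda>t. 2 + P d (t + \<i>*y) (t - \<i>*y) + P d (t - \<i>*y) (t + \<i>*y)) has_field_derivative
     0 + of_nat d * (G (Suc d) (x + \<i>*y) (x - \<i>*y) * 1 - G d (x + \<i>*y) (x - \<i>*y) * 1)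
       + of_nat d * (G (Suc d) (x - \<i>*y) (x + \<i>*y) * 1 - G d (x - \<i>*y) (x + \<i>*y) * 1)) (at x)"
    by (intro DERIV_add DERIV_const P_deriv[OF da db] P_deriv[OF db da])
  show ?thesis unfolding f
    by (rule DERIV_cong[OF D]) (simp add: AA_def algebra_simps)
qed

lemma FR_dy:
  assumes d: "d \<ge> 1"
  shows "((\<lambda>t. folding_A2_R d x t) has_field_derivative
     of_nat d * \<i> * (AA d (x + \<i>*y) (x - \<i>*y) - AA d (x - \<i>*y) (x + \<i>*y))) (at y)"
proof -
  have f: "(\<lambda>t. folding_A2_R d x t) = (\<lambda>t. 2 + P d (x + \<i>*t) (x - \<i>*t) + P d (x - \<i>*t) (x + \<i>*t))"
    using FR_eq[OF d] by auto
  have da: "((\<lambda>t. x + \<i>*t) has_field_derivative \<i>) (at y)"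
    by (auto intro!: derivative_eq_intros)
  have db: "((\<lambda>t. x - \<i>*t) has_field_derivative -\<i>) (at y)"
    by (auto intro!: derivative_eq_intros)
  have D: "((\<lambda>t. 2 + P d (x + \<i>*t) (x - \<i>*t) + P d (x - \<i>*t) (x + \<i>*t)) has_field_derivative
     0 + of_nat d * (G (Suc d) (x + \<i>*y) (x - \<i>*y) * \<i> - G d (x + \<i>*y) (x - \<i>*y) * -\<i>)
       + of_nat d * (G (Suc d) (x - \<i>*y) (x + \<i>*y) * -\<i> - G d (x - \<i>*y) (x + \<i>*y) * \<i>)) (at y)"
    by (intro DERIV_add DERIV_const P_deriv[OF da db] P_deriv[OF db da])
  show ?thesis unfolding f
    by (rule DERIV_cong[OF D]) (simp add: AA_def algebra_simps)
qed

lemma sumdiff0: "(a::complex) + b = 0 \<and> a - b = 0 \<longleftrightarrow> a = 0 \<and> b = 0"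
proof
  assume h: "a + b = 0 \<and> a - b = 0"
  then have "b = a" by simp
  with h have "a + a = 0" by simp
  then have "a = 0" by simp
  with \<open>b = a\<close> show "a = 0 \<and> b = 0" by simp
qed simp

lemma crit_iff:
  assumes d: "d \<ge> 1"
  shows "(x, y) \<in> crit_points (folding_A2_R d) \<longleftrightarrow>
     AA d (x + \<i>*y) (x - \<i>*y) = 0 \<and> AA d (x - \<i>*y) (x + \<i>*y) = 0"
proof -
  let ?A = "AA d (x + \<i>*y) (x - \<i>*y)" and ?B = "AA d (x - \<i>*y) (x + \<i>*y)"
  have dn: "of_nat d \<noteq> (0::complex)" using d by simp
  have "(x, y) \<in> crit_points (folding_A2_R d) \<longleftrightarrow>
      of_nat d * (?A + ?B) = 0 \<and> of_nat d * \<i> * (?A - ?B) = 0"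
  proof -
    have e1: "((\<lambda>t. folding_A2_R d t y) has_field_derivative 0) (at x) \<longleftrightarrow> of_nat d * (?A + ?B) = 0"
    proof
      assume h: "((\<lambda>t. folding_A2_R d t y) has_field_derivative 0) (at x)"
      show "of_nat d * (?A + ?B) = 0" using DERIV_unique[OF FR_dx[OF d, of y x] h] .
    next
      assume h0: "of_nat d * (?A + ?B) = 0"
      show "((\<lambda>t. folding_A2_R d t y) has_field_derivative 0) (at x)"
        using FR_dx[OF d, of y x] unfolding h0 .
    qed
    have e2: "((\<lambda>t. folding_A2_R d x t) has_field_derivative 0) (at y) \<longleftrightarrow> of_nat d * \<i> * (?A - ?B) = 0"
    proof
      assume h: "((\<lambda>t. folding_A2_R d x t) has_field_derivative 0) (at y)"
      show "of_nat d * \<i> * (?A - ?B) = 0" using DERIV_unique[OF FR_dy[OF d, of x y] h] .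
    next
      assume h0: "of_nat d * \<i> * (?A - ?B) = 0"
      show "((\<lambda>t. folding_A2_R d x t) has_field_derivative 0) (at y)"
        using FR_dy[OF d, of x y] unfolding h0 .
    qed
    show ?thesis unfolding crit_points_def using e1 e2 by simp
  qed
  also have "\<dots> \<longleftrightarrow> ?A + ?B = 0 \<and> ?A - ?B = 0" using dn by simp
  also have "\<dots> \<longleftrightarrow> ?A = 0 \<and> ?B = 0" by (rule sumdiff0)
  finally show ?thesis .
qed

lemma cubic_roots: "\<exists>a b c. a+b+c = X \<and> a*b+a*c+b*c = Y \<and> a*b*c = (1::complex)"
proof -
  have "\<exists>z. poly [:-1, Y, -X, 1:] z = (0::complex)"
    by (rule fundamental_theorem_of_algebra_alt) auto
  then obtain a where ha: "-1 + a * (Y + a * (-X + a)) = 0" by auto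
  define s where "s = X - a"
  define p where "p = a^2 - X*a + Y"
  define r where "r = csqrt (s^2 - 4*p)"
  define b where "b = (s + r)/2"
  define c where "c = (s - r)/2"
  have r2: "r^2 = s^2 - 4*p" by (simp add: r_def)
  have bc1: "b + c = s" by (simp add: b_def c_def field_simps)
  have bc2: "b * c = p"
  proof -
    have "b * c = (s^2 - r^2)/4" by (simp add: b_def c_def field_simps power2_eq_square)
    also have "\<dots> = p" using r2 by simp
    finally show ?thesis .
  qed
  have "a + b + c = X" using bc1 by (simp add: s_def add.assoc)
  moreover have "a*b + a*c + b*c = Y"
  proof -
    have "a*b + a*c + b*c = a*(b+c) + b*c" by (simp add: algebra_simps)
    also have "\<dots> = Y" unfolding bc1 bc2 s_def p_def by (simp add: algebra_simps power2_eq_square)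
    finally show ?thesis .
  qed
  moreover have "a*b*c = 1"
  proof -
    have "a*b*c = a*(b*c)" by (simp add: algebra_simps)
    also have "\<dots> = 1" unfolding bc2 p_def using ha by (simp add: algebra_simps power2_eq_square)
    finally show ?thesis .
  qed
  ultimately show ?thesis by blast
qed

lemma two_induct:
  assumes "R 0" "R 1" "\<And>n. R n \<Longrightarrow> R (Suc n) \<Longrightarrow> R (Suc (Suc n))"
  shows "R n"
proof (induction n rule: less_induct)
  case (less n)
  show ?case
  proof (cases n)
    case 0 then show ?thesis using assms by simp
  next
    case (Suc k) note k = this
    show ?thesis
    proof (cases k)
      case 0 then show ?thesis using assms k by simp
    next
      case (Suc l) then show ?thesis using assms(3)[of l] less k by simp
    qed
  qed
qed

fun Q :: "nat \<Rightarrow> complex \<Rightarrow> complex \<Rightarrow> complex" where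
  "Q 0 a b = 0"
| "Q (Suc 0) a b = 1"
| "Q (Suc (Suc n)) a b = (a + b) * Q (Suc n) a b - a * b * Q n a b"

lemma Q_diff: "(a - b) * Q n a b = a^n - b^n"
proof (induction n rule: two_induct)
  case (3 n)
  have "(a - b) * Q (Suc (Suc n)) a b = (a + b) * ((a - b) * Q (Suc n) a b) - a * b * ((a - b) * Q n a b)"
    by (simp add: algebra_simps)
  also have "\<dots> = a ^ Suc (Suc n) - b ^ Suc (Suc n)" unfolding 3 by (simp add: algebra_simps)
  finally show ?case .
qed auto

lemma Q_same: "Q n a a * a = of_nat n * a^n"
proof (induction n rule: two_induct)
  case (3 n)
  have "Q (Suc (Suc n)) a a * a = 2 * a * (Q (Suc n) a a * a) - a * a * (Q n a a * a)"
    by (simp add: algebra_simps)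
  also have "\<dots> = of_nat (Suc (Suc n)) * a ^ Suc (Suc n)" unfolding 3 by (simp add: algebra_simps)
  finally show ?case .
qed auto

lemma root3:
  fixes a b c z X Y :: complex
  assumes "X = a+b+c" "Y = a*b+a*c+b*c" "a*b*c = 1" "z = a \<or> z = b \<or> z = c"
  shows "z^3 = X * z^2 - Y * z + 1"
proof -
  have "(z - a) * (z - b) * (z - c) = 0" using assms(4) by auto
  then show ?thesis using assms(1-3) by (simp add: algebra_simps power2_eq_square power3_eq_cube)
qed

lemma P_power:
  assumes e1: "X = a+b+c" and e2: "Y = a*b+a*c+b*c" and e3: "a*b*c = 1"
  shows "P n X Y = a^n + b^n + c^n"
proof (induction n rule: three_induct)
  case 1 then show ?case by simp
next
  case 2 then show ?case using e1 by simp
next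
  case 3 then show ?case using e1 e2 by (simp add: numeral_2_eq_2 algebra_simps power2_eq_square)
next
  case (4 n)
  have r: "z ^ Suc (Suc (Suc n)) = X * z ^ Suc (Suc n) - Y * z ^ Suc n + z ^ n" if "z = a \<or> z = b \<or> z = c" for z
  proof -
    have "z ^ Suc (Suc (Suc n)) = z^3 * z^n" by (simp add: power_add[symmetric] eval_nat_numeral)
    also have "\<dots> = (X * z^2 - Y * z + 1) * z^n" using root3[OF e1 e2 e3 that] by simp
    also have "\<dots> = X * z ^ Suc (Suc n) - Y * z ^ Suc n + z ^ n" by (simp add: algebra_simps power2_eq_square)
    finally show ?thesis .
  qed
  have "P (Suc (Suc (Suc n))) X Y = X * P (Suc (Suc n)) X Y - Y * P (Suc n) X Y + P n X Y" by simp
  also have "\<dots> = (X * a ^ Suc (Suc n) - Y * a ^ Suc n + a ^ n) + (X * b ^ Suc (Suc n) - Y * b ^ Suc n + b ^ n)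
       + (X * c ^ Suc (Suc n) - Y * c ^ Suc n + c ^ n)"
    unfolding 4 by (simp only: algebra_simps)
  also have "\<dots> = a ^ Suc (Suc (Suc n)) + b ^ Suc (Suc (Suc n)) + c ^ Suc (Suc (Suc n))"
    using r[of a] r[of b] r[of c] by simp
  finally show ?case .
qed

lemma G_Q:
  assumes e1: "X = a+b+c" and e2: "Y = a*b+a*c+b*c" and e3: "a*b*c = 1"
  shows "G (Suc n) X Y - c * G n X Y = Q n a b"
proof (induction n rule: two_induct)
  case 1 then show ?case by simp
next
  case 2 then show ?case by (simp add: numeral_2_eq_2)
next
  case (3 n)
  have "G (Suc (Suc (Suc n))) X Y - c * G (Suc (Suc n)) X Y =
     (X - c) * G (Suc (Suc n)) X Y - Y * G (Suc n) X Y + (a*b*c) * G n X Y"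
    using e3 by (simp add: algebra_simps)
  also have "\<dots> = (a + b) * (G (Suc (Suc n)) X Y - c * G (Suc n) X Y) - a * b * (G (Suc n) X Y - c * G n X Y)"
    using e1 e2 by (simp add: algebra_simps)
  also have "\<dots> = Q (Suc (Suc n)) a b" unfolding 3 by simp
  finally show ?case .
qed

lemma key:
  assumes e1: "X = a+b+c" and e2: "Y = a*b+a*c+b*c" and e3: "a*b*c = 1"
  shows "AA d X Y + c * AA d Y X = Q d a b + c * Q d (b*c) (a*c)"
proof -
  have q1: "G (Suc d) X Y - c * G d X Y = Q d a b" by (rule G_Q[OF e1 e2 e3])
  have f1: "Y = b*c + a*c + a*b" using e2 by (simp add: algebra_simps)
  have f2: "X = b*c*(a*c) + b*c*(a*b) + a*c*(a*b)"
  proof -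
    have "b*c*(a*c) + b*c*(a*b) + a*c*(a*b) = (a*b*c)*(c + b + a)" by (simp add: algebra_simps)
    then show ?thesis using e1 e3 by (simp add: algebra_simps)
  qed
  have f3: "b*c*(a*c)*(a*b) = 1"
  proof -
    have "b*c*(a*c)*(a*b) = (a*b*c)*(a*b*c)" by (simp add: algebra_simps)
    then show ?thesis using e3 by simp
  qed
  have q2: "G (Suc d) Y X - a*b * G d Y X = Q d (b*c) (a*c)" by (rule G_Q[OF f1 f2 f3])
  have "AA d X Y + c * AA d Y X = (G (Suc d) X Y - c * G d X Y) + c * (G (Suc d) Y X - a*b * G d Y X)
      + (a*b*c - 1) * G d Y X"
    unfolding AA_def by (simp add: algebra_simps)
  also have "\<dots> = Q d a b + c * Q d (b*c) (a*c)" unfolding q1 q2 e3 by simp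
  finally show ?thesis .
qed

definition wfun :: "nat \<Rightarrow> complex \<Rightarrow> complex" where
  "wfun d t = t^d - inverse t ^ d"

lemma Kdiff:
  assumes e3: "a*b*c = 1"
  shows "(a - b) * (Q d a b + c * Q d (b*c) (a*c)) = wfun d a - wfun d b"
proof -
  have ia: "inverse a = b*c" by (rule inverse_unique) (use e3 in \<open>simp add: mult.assoc\<close>)
  have ib: "inverse b = a*c" by (rule inverse_unique) (use e3 in \<open>simp add: algebra_simps\<close>)
  have "(a - b) * (Q d a b + c * Q d (b*c) (a*c)) = (a - b) * Q d a b - (b*c - a*c) * Q d (b*c) (a*c)"
    by (simp add: algebra_simps)
  also have "\<dots> = (a^d - b^d) - ((b*c)^d - (a*c)^d)" unfolding Q_diff ..
  also have "\<dots> = wfun d a - wfun d b" unfolding wfun_def ia ib by simp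
  finally show ?thesis .
qed

lemma no_double:
  assumes e3: "a*a*c = 1" and d: "d \<ge> 1"
    and K: "Q d a a + c * Q d (a*c) (a*c) = 0" and w: "wfun d a = wfun d c"
  shows False
proof -
  define m where "m = a*c"
  have a0: "a \<noteq> 0" and m0: "m \<noteq> 0" using e3 by (auto simp: m_def)
  have am: "a * m = 1" using e3 by (simp add: m_def algebra_simps)
  have cm: "c = m*m" using am e3 by (metis m_def mult.assoc mult.commute mult.left_neutral)
  have K': "Q d a a + c * Q d m m = 0" using K by (simp add: m_def)
  have "m * (Q d a a * a) + c * a * (Q d m m * m) = a*m*(Q d a a + c*Q d m m)" by (simp add: algebra_simps)
  also have "\<dots> = 0" using K' by simp
  finally have "0 = m * (Q d a a * a) + c * a * (Q d m m * m)" by simp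
  also have "\<dots> = of_nat d * m * (a^d + m^d)"
    unfolding Q_same using am by (simp add: m_def algebra_simps)
  finally have "of_nat d * m * (a^d + m^d) = 0" by simp
  then have s: "m^d = -(a^d)" using d m0 by (simp add: add_eq_0_iff)
  have ia: "inverse a = m" using am by (rule inverse_unique)
  have ic: "inverse c = a * a" by (rule inverse_unique) (use e3 in \<open>simp add: algebra_simps\<close>)
  have wa: "wfun d a = 2 * a^d" unfolding wfun_def ia s by simp
  have "wfun d c = c^d - (a*a)^d" unfolding wfun_def ic ..
  also have "\<dots> = 0" unfolding cm power_mult_distrib s by simp
  finally have wc: "wfun d c = 0" .
  from w wa wc have "a^d = 0" by simp
  then show False using a0 by simp
qed

lemma crit_roots:
  assumes e1: "X = a+b+c" and e2: "Y = a*b+a*c+b*c" and e3: "a*b*c = 1" and d: "d \<ge> 1"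
  shows "(AA d X Y = 0 \<and> AA d Y X = 0) \<longleftrightarrow>
     (a \<noteq> b \<and> a \<noteq> c \<and> b \<noteq> c \<and> wfun d a = wfun d b \<and> wfun d a = wfun d c)"
proof -
  have kc: "AA d X Y + c * AA d Y X = Q d a b + c * Q d (b*c) (a*c)" by (rule key[OF e1 e2 e3])
  have kb: "AA d X Y + b * AA d Y X = Q d a c + b * Q d (c*b) (a*b)"
    by (rule key) (use e1 e2 e3 in \<open>simp_all add: algebra_simps\<close>)
  have ka: "AA d X Y + a * AA d Y X = Q d b c + a * Q d (c*a) (b*a)"
    by (rule key) (use e1 e2 e3 in \<open>simp_all add: algebra_simps\<close>)
  have dc: "(a - b) * (Q d a b + c * Q d (b*c) (a*c)) = wfun d a - wfun d b" by (rule Kdiff[OF e3])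
  have db: "(a - c) * (Q d a c + b * Q d (c*b) (a*b)) = wfun d a - wfun d c"
    by (rule Kdiff) (use e3 in \<open>simp add: algebra_simps\<close>)
  have da: "(b - c) * (Q d b c + a * Q d (c*a) (b*a)) = wfun d b - wfun d c"
    by (rule Kdiff) (use e3 in \<open>simp add: algebra_simps\<close>)
  show ?thesis
  proof
    assume AB: "AA d X Y = 0 \<and> AA d Y X = 0"
    have Kc: "Q d a b + c * Q d (b*c) (a*c) = 0" using kc AB by simp
    have Kb: "Q d a c + b * Q d (c*b) (a*b) = 0" using kb AB by simp
    have Ka: "Q d b c + a * Q d (c*a) (b*a) = 0" using ka AB by simp
    have wab: "wfun d a = wfun d b" using dc Kc by simp
    have wac: "wfun d a = wfun d c" using db Kb by simp
    have nab: "a \<noteq> b"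
    proof
      assume "a = b"
      then show False using no_double[of a c d] e3 d Kc wac by simp
    qed
    have nac: "a \<noteq> c"
    proof
      assume "a = c"
      then show False using no_double[of a b d] e3 d Kb wab by (simp add: algebra_simps)
    qed
    have nbc: "b \<noteq> c"
    proof
      assume "b = c"
      then show False using no_double[of b a d] e3 d Ka wab by (simp add: algebra_simps)
    qed
    show "a \<noteq> b \<and> a \<noteq> c \<and> b \<noteq> c \<and> wfun d a = wfun d b \<and> wfun d a = wfun d c"
      using nab nac nbc wab wac by simp
  next
    assume H: "a \<noteq> b \<and> a \<noteq> c \<and> b \<noteq> c \<and> wfun d a = wfun d b \<and> wfun d a = wfun d c"
    have z1: "(a - b) * (Q d a b + c * Q d (b*c) (a*c)) = 0" using dc H by simp
    have w0: "wfun d a - wfun d c = 0" using H by (metis diff_self)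
    have z2: "(a - c) * (Q d a c + b * Q d (c*b) (a*b)) = 0" unfolding db by (rule w0)
    have Kc: "Q d a b + c * Q d (b*c) (a*c) = 0" using z1 H by simp
    have Kb: "Q d a c + b * Q d (c*b) (a*b) = 0" using z2 H by simp
    have h1: "AA d X Y + c * AA d Y X = 0" using kc Kc by simp
    have h2: "AA d X Y + b * AA d Y X = 0" using kb Kb by simp
    have "(c - b) * AA d Y X = (AA d X Y + c * AA d Y X) - (AA d X Y + b * AA d Y X)"
      by (simp add: algebra_simps)
    also have "\<dots> = 0" using h1 h2 by simp
    finally have "(c - b) * AA d Y X = 0" .
    moreover have "c - b \<noteq> 0" using H by auto
    ultimately have B: "AA d Y X = 0" by simp
    then have "AA d X Y = 0" using h1 by simp
    with B show "AA d X Y = 0 \<and> AA d Y X = 0" by simp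
  qed
qed

lemma FR_value:
  assumes e1: "x + \<i>*y = a+b+c" and e2: "x - \<i>*y = a*b+a*c+b*c" and e3: "a*b*c = 1" and d: "d \<ge> 1"
  shows "folding_A2_R d x y = 2 + (a^d + b^d + c^d) + (inverse a ^ d + inverse b ^ d + inverse c ^ d)"
proof -
  have ia: "inverse a = b*c" by (rule inverse_unique) (use e3 in \<open>simp add: mult.assoc\<close>)
  have ib: "inverse b = a*c" by (rule inverse_unique) (use e3 in \<open>simp add: algebra_simps\<close>)
  have ic: "inverse c = a*b" by (rule inverse_unique) (use e3 in \<open>simp add: algebra_simps\<close>)
  have f1: "x - \<i>*y = b*c + a*c + a*b" using e2 by (simp add: algebra_simps)
  have f2: "x + \<i>*y = b*c*(a*c) + b*c*(a*b) + a*c*(a*b)"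
  proof -
    have "b*c*(a*c) + b*c*(a*b) + a*c*(a*b) = (a*b*c)*(c + b + a)" by (simp add: algebra_simps)
    then show ?thesis using e1 e3 by (simp add: algebra_simps)
  qed
  have f3: "b*c*(a*c)*(a*b) = 1"
  proof -
    have "b*c*(a*c)*(a*b) = (a*b*c)*(a*b*c)" by (simp add: algebra_simps)
    then show ?thesis using e3 by simp
  qed
  show ?thesis
    unfolding FR_eq[OF d] P_power[OF e1 e2 e3] P_power[OF f1 f2 f3] ia ib ic by simp
qed

lemma winv_eq:
  fixes u v :: complex
  assumes "u \<noteq> 0" "v \<noteq> 0"
  shows "u - inverse u = v - inverse v \<longleftrightarrow> u = v \<or> u * v = -1"
proof -
  have "u - inverse u - (v - inverse v) = (u - v) * (u * v + 1) / (u * v)"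
    using assms by (simp add: field_simps)
  then have "u - inverse u = v - inverse v \<longleftrightarrow> (u - v) * (u * v + 1) = 0"
    using assms by (metis divide_eq_0_iff eq_iff_diff_eq_0 mult_eq_0_iff)
  also have "\<dots> \<longleftrightarrow> u = v \<or> u * v = -1" by (simp add: eq_neg_iff_add_eq_0)
  finally show ?thesis .
qed

lemma pattern:
  fixes u v w :: complex
  assumes nz: "u \<noteq> 0" "v \<noteq> 0" "w \<noteq> 0" and p: "u*v*w = 1"
    and e1: "u - inverse u = v - inverse v" and e2: "u - inverse u = w - inverse w"
  shows "(u = v \<and> v = w \<and> u^2+u+1 = 0) \<or> (u = 1 \<and> v = 1 \<and> w = 1)
     \<or> (u = -1 \<and> v = -1 \<and> w = 1) \<or> (u = -1 \<and> v = 1 \<and> w = -1) \<or> (u = 1 \<and> v = -1 \<and> w = -1)"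
proof -
  have c1: "u = v \<or> u * v = -1" using winv_eq[OF nz(1,2)] e1 by simp
  have c2: "u = w \<or> u * w = -1" using winv_eq[OF nz(1,3)] e2 by simp
  show ?thesis
  proof (cases "u = v")
    case uv: True
    show ?thesis
    proof (cases "u = w")
      case uw: True
      have "u^3 = 1" using p uv uw by (simp add: power3_eq_cube)
      then have "(u - 1) * (u^2 + u + 1) = 0" by (simp add: algebra_simps power2_eq_square power3_eq_cube)
      then show ?thesis using uv uw by auto
    next
      case uw: False
      then have "u * w = -1" using c2 by simp
      have "u * (u * w) = 1" using p uv by (simp add: mult.assoc)
      then have "- u = 1" using \<open>u * w = -1\<close> by simp
      then have "u = -1" by (metis minus_minus)
      then show ?thesis using \<open>u * w = -1\<close> uv by simp
    qed
  next
    case uv: False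
    then have uv': "u * v = -1" using c1 by simp
    have "- w = 1" using p uv' by simp
    then have "w = -1" by (metis minus_minus)
    show ?thesis
    proof (cases "u = w")
      case True
      then show ?thesis using uv' \<open>w = -1\<close> by simp
    next
      case False
      then have "u * w = -1" using c2 by simp
      then have "u = 1" using \<open>w = -1\<close> by simp
      then show ?thesis using uv' \<open>w = -1\<close> by simp
    qed
  qed
qed

lemma real_from_conj:
  assumes "x + \<i>*y = X" "x - \<i>*y = cnj X"
  shows "x \<in> \<real> \<and> y \<in> \<real>"
proof -
  have "X + cnj X = 2 * x" unfolding assms(2)[symmetric] unfolding assms(1)[symmetric] by simp
  then have "2 * x = X + cnj X" by simp
  then have "x = of_real (Re X)" by (simp add: complex_add_cnj)
  moreover have "X - cnj X = 2 * \<i> * y" unfolding assms(2)[symmetric] unfolding assms(1)[symmetric] by simp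
  then have "y = of_real (Im X)" by (simp add: complex_diff_cnj)
  ultimately show ?thesis by simp
qed

lemma norm1_inv: "norm (a::complex) = 1 \<Longrightarrow> inverse a = cnj a"
  by (rule inverse_unique) (simp add: complex_mult_cnj cmod_def power2_eq_square)

definition pat :: "complex \<Rightarrow> complex \<Rightarrow> complex \<Rightarrow> bool" where
  "pat u v w \<longleftrightarrow> (u = v \<and> v = w \<and> u^2+u+1 = 0) \<or> (u = 1 \<and> v = 1 \<and> w = 1)
     \<or> (u = -1 \<and> v = -1 \<and> w = 1) \<or> (u = -1 \<and> v = 1 \<and> w = -1) \<or> (u = 1 \<and> v = -1 \<and> w = -1)"

definition zpat :: "complex \<Rightarrow> complex \<Rightarrow> complex \<Rightarrow> bool" where
  "zpat u v w \<longleftrightarrow> (u = -1 \<and> v = -1 \<and> w = 1) \<or> (u = -1 \<and> v = 1 \<and> w = -1) \<or> (u = 1 \<and> v = -1 \<and> w = -1)"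

definition Vf :: "complex \<Rightarrow> complex \<Rightarrow> complex \<Rightarrow> complex" where
  "Vf u v w = 2 + (u+v+w) + (inverse u + inverse v + inverse w)"

lemma cube1: "(u::complex)^2+u+1 = 0 \<Longrightarrow> u^3 = 1"
proof -
  assume h: "u^2+u+1 = 0"
  have "u^3 - 1 = (u - 1) * (u^2+u+1)" by (simp add: algebra_simps power2_eq_square power3_eq_cube)
  then show ?thesis using h by simp
qed

lemma case1_val:
  assumes "(u::complex)^2+u+1 = 0"
  shows "Vf u u u = -1"
proof -
  have u3: "u^3 = 1" by (rule cube1[OF assms])
  have iu: "inverse u = u*u" by (rule inverse_unique) (use u3 in \<open>simp add: power3_eq_cube mult.assoc\<close>)
  have "Vf u u u = 2 + 3 * (u^2+u)" unfolding Vf_def iu by (simp add: algebra_simps power2_eq_square)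
  also have "\<dots> = 2 + 3 * ((u^2+u+1) - 1)" by simp
  also have "\<dots> = -1" unfolding assms by simp
  finally show ?thesis .
qed

lemma pat_vals:
  assumes "pat u v w"
  shows "(Vf u v w = -1 \<longleftrightarrow> (u = v \<and> v = w \<and> u^2+u+1 = 0))
    \<and> (Vf u v w = 0 \<longleftrightarrow> zpat u v w)
    \<and> (Vf u v w \<noteq> 0 \<and> Vf u v w \<noteq> -1 \<longrightarrow> Vf u v w = 8)
    \<and> norm u = 1 \<and> norm v = 1 \<and> norm w = 1"
proof -
  consider (c1) "u = v \<and> v = w \<and> u^2+u+1 = 0" | (c2) "u = 1 \<and> v = 1 \<and> w = 1" | (c3) "zpat u v w"
    using assms unfolding pat_def zpat_def by blast
  then show ?thesis
  proof cases
    case c1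
    from c1 have vu: "v = u" "w = u" and uu: "u^2+u+1=0" by auto
    have V: "Vf u v w = -1" unfolding vu using case1_val[OF uu] .
    have "norm (u^3) = 1" using cube1[OF uu] by simp
    then have "norm u ^ 3 = 1 ^ 3" by (simp add: norm_power)
    then have n: "norm u = 1" by (rule power_eq_imp_eq_base) auto
    have nz: "\<not> zpat u v w" using c1 unfolding zpat_def by auto
    show ?thesis using V n nz uu unfolding vu by simp
  next
    case c2
    then show ?thesis unfolding zpat_def Vf_def by simp
  next
    case c3
    then consider "u = -1 \<and> v = -1 \<and> w = 1" | "u = -1 \<and> v = 1 \<and> w = -1" | "u = 1 \<and> v = -1 \<and> w = -1"
      unfolding zpat_def by blast
    then show ?thesis by cases (simp_all add: zpat_def Vf_def)
  qed
qed

lemma crit_char: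
  assumes e1: "x + \<i>*y = a+b+c" and e2: "x - \<i>*y = a*b+a*c+b*c" and e3: "a*b*c = 1" and d: "d \<ge> 1"
  shows "(x, y) \<in> crit_points (folding_A2_R d) \<longleftrightarrow>
     a \<noteq> b \<and> a \<noteq> c \<and> b \<noteq> c \<and> pat (a^d) (b^d) (c^d)"
proof -
  have nz: "a \<noteq> 0" "b \<noteq> 0" "c \<noteq> 0" using e3 by auto
  have w: "wfun d z = z^d - inverse (z^d)" for z by (simp add: wfun_def power_inverse)
  have "a^d * b^d * c^d = (a*b*c)^d" by (simp add: power_mult_distrib)
  then have prod: "a^d * b^d * c^d = 1" using e3 by simp
  have "(x, y) \<in> crit_points (folding_A2_R d) \<longleftrightarrow>
     (a \<noteq> b \<and> a \<noteq> c \<and> b \<noteq> c \<and> wfun d a = wfun d b \<and> wfun d a = wfun d c)"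
    unfolding crit_iff[OF d] using crit_roots[OF e1 e2 e3 d] .
  also have "\<dots> \<longleftrightarrow> a \<noteq> b \<and> a \<noteq> c \<and> b \<noteq> c \<and> pat (a^d) (b^d) (c^d)"
  proof -
    have "wfun d a = wfun d b \<and> wfun d a = wfun d c \<longleftrightarrow> pat (a^d) (b^d) (c^d)"
    proof
      assume H: "wfun d a = wfun d b \<and> wfun d a = wfun d c"
      have H': "a^d - inverse(a^d) = b^d - inverse(b^d) \<and> a^d - inverse(a^d) = c^d - inverse(c^d)"
        using H unfolding w .
      have nzp: "a^d \<noteq> 0" "b^d \<noteq> 0" "c^d \<noteq> 0" using nz by simp_all
      show "pat (a^d) (b^d) (c^d)" unfolding pat_def
        by (rule pattern[OF nzp prod H'[THEN conjunct1] H'[THEN conjunct2]])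
    next
      assume "pat (a^d) (b^d) (c^d)"
      then show "wfun d a = wfun d b \<and> wfun d a = wfun d c" unfolding pat_def w by auto
    qed
    then show ?thesis by blast
  qed
  finally show ?thesis .
qed

lemma val_char:
  assumes e1: "x + \<i>*y = a+b+c" and e2: "x - \<i>*y = a*b+a*c+b*c" and e3: "a*b*c = 1" and d: "d \<ge> 1"
  shows "folding_A2_R d x y = Vf (a^d) (b^d) (c^d)"
  unfolding FR_value[OF e1 e2 e3 d] Vf_def by (simp add: power_inverse)

definition ptm :: "complex \<Rightarrow> complex \<Rightarrow> complex \<times> complex" where
  "ptm X Y = ((X+Y)/2, (X-Y)/(2*\<i>))"

lemma ptm_eq: "x + \<i>*y = X \<Longrightarrow> x - \<i>*y = Y \<Longrightarrow> (x, y) = ptm X Y"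
  unfolding ptm_def by (auto simp: field_simps)

lemma ptm_coords: "(x, y) = ptm X Y \<Longrightarrow> x + \<i>*y = X \<and> x - \<i>*y = Y"
proof -
  assume "(x, y) = ptm X Y"
  then have hx: "x = (X+Y)/2" and hy: "y = (X-Y)/(2*\<i>)" by (simp_all add: ptm_def)
  have iy: "\<i>*y = (X-Y)/2" unfolding hy by (simp add: field_simps)
  show ?thesis unfolding iy hx by (simp add: field_simps)
qed

lemma ptm_inj: "ptm X Y = ptm X' Y' \<Longrightarrow> X = X' \<and> Y = Y'"
  by (metis ptm_coords surj_pair)

lemma same_roots:
  fixes a b c a' b' c' :: complex
  assumes "a+b+c = a'+b'+c'" "a*b+a*c+b*c = a'*b'+a'*c'+b'*c'" "a*b*c = 1" "a'*b'*c' = 1"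
  shows "a' = a \<or> a' = b \<or> a' = c"
proof -
  have r: "a'^3 = (a+b+c) * a'^2 - (a*b+a*c+b*c) * a' + 1"
    by (rule root3[where a=a' and b=b' and c=c' and z=a']) (use assms in auto)
  have "(a' - a) * (a' - b) * (a' - c) = a'^3 - (a+b+c) * a'^2 + (a*b+a*c+b*c) * a' - a*b*c"
    by (simp add: algebra_simps power2_eq_square power3_eq_cube)
  also have "\<dots> = 0" using r assms(3) by simp
  finally have "(a' - a) * (a' - b) * (a' - c) = 0" .
  then show ?thesis by simp
qed

definition phi :: "complex set \<Rightarrow> complex \<times> complex" where
  "phi S = ptm ((\<Sum>s\<in>S. s) + inverse (\<Prod>s\<in>S. s)) ((\<Prod>s\<in>S. s) + (\<Sum>s\<in>S. inverse s))"

lemma phi_pair: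
  assumes "p \<noteq> q" "p*q*r = 1"
  shows "phi {p, q} = ptm (p+q+r) (p*q+p*r+q*r)"
proof -
  have ir: "inverse (p*q) = r" by (rule inverse_unique) (use assms in \<open>simp add: algebra_simps\<close>)
  have ip: "inverse p = q*r" by (rule inverse_unique) (use assms in \<open>simp add: algebra_simps\<close>)
  have iq: "inverse q = p*r" by (rule inverse_unique) (use assms in \<open>simp add: algebra_simps\<close>)
  have s1: "(\<Sum>s\<in>{p,q}. s) = p + q" and s2: "(\<Prod>s\<in>{p,q}. s) = p * q"
    and s3: "(\<Sum>s\<in>{p,q}. inverse s) = inverse p + inverse q" using assms(1) by simp_all
  show ?thesis unfolding phi_def s1 s2 s3 ir ip iq by (simp add: algebra_simps)
qed

lemma crit_obtain:
  assumes d: "d \<ge> 1" and C: "(x, y) \<in> crit_points (folding_A2_R d)"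
  obtains a b c where "x + \<i>*y = a+b+c" "x - \<i>*y = a*b+a*c+b*c" "a*b*c = 1"
    "a \<noteq> b" "a \<noteq> c" "b \<noteq> c" "pat (a^d) (b^d) (c^d)"
    "folding_A2_R d x y = Vf (a^d) (b^d) (c^d)"
proof -
  obtain a b c where e: "a+b+c = x + \<i>*y" "a*b+a*c+b*c = x - \<i>*y" "a*b*c = 1"
    using cubic_roots by blast
  have e1: "x + \<i>*y = a+b+c" and e2: "x - \<i>*y = a*b+a*c+b*c" using e by simp_all
  show ?thesis using that[OF e1 e2 e(3)] crit_char[OF e1 e2 e(3) d] val_char[OF e1 e2 e(3) d] C by blast
qed

lemma crit_real:
  assumes d: "d \<ge> 1" and C: "(x, y) \<in> crit_points (folding_A2_R d)"
  shows "x \<in> \<real> \<and> y \<in> \<real>"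
proof -
  obtain a b c where e1: "x + \<i>*y = a+b+c" and e2: "x - \<i>*y = a*b+a*c+b*c" and e3: "a*b*c = 1"
    and p: "pat (a^d) (b^d) (c^d)"
    using crit_obtain[OF d C] by blast
  have n: "norm (a^d) = 1" "norm (b^d) = 1" "norm (c^d) = 1" using pat_vals[OF p] by auto
  have n1: "norm z = 1" if "norm (z^d) = 1" for z :: complex
  proof -
    have "norm z ^ d = 1 ^ d" using that by (simp add: norm_power)
    then show ?thesis by (rule power_eq_imp_eq_base) (use d in auto)
  qed
  have ia: "inverse a = cnj a" and ib: "inverse b = cnj b" and ic: "inverse c = cnj c"
    using n1[OF n(1)] n1[OF n(2)] n1[OF n(3)] norm1_inv by auto
  have ia': "inverse a = b*c" by (rule inverse_unique) (use e3 in \<open>simp add: algebra_simps\<close>)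
  have ib': "inverse b = a*c" by (rule inverse_unique) (use e3 in \<open>simp add: algebra_simps\<close>)
  have ic': "inverse c = a*b" by (rule inverse_unique) (use e3 in \<open>simp add: algebra_simps\<close>)
  have "x - \<i>*y = cnj (a+b+c)" unfolding e2 complex_cnj_add ia[symmetric] ib[symmetric] ic[symmetric] ia' ib' ic'
    by (simp add: algebra_simps)
  then show ?thesis using real_from_conj[OF e1] by simp
qed

lemma crit_8:
  assumes d: "d \<ge> 1" and C: "(x, y) \<in> crit_points (folding_A2_R d)"
    and "folding_A2_R d x y \<noteq> 0" "folding_A2_R d x y \<noteq> -1"
  shows "folding_A2_R d x y = 8"
proof -
  obtain a b c where p: "pat (a^d) (b^d) (c^d)" and v: "folding_A2_R d x y = Vf (a^d) (b^d) (c^d)"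
    using crit_obtain[OF d C] by blast
  show ?thesis using pat_vals[OF p] v assms(3,4) by simp
qed

lemma pair_facts:
  assumes d: "d \<ge> 1" and p: "p^d = -1" and q: "q^d = (-1::complex)"
  shows "p * q * inverse (p*q) = 1" "inverse (p*q) ^ d = 1" "p \<noteq> inverse (p*q)" "q \<noteq> inverse (p*q)"
proof -
  have nz: "p \<noteq> 0" "q \<noteq> 0" using p q d by (auto simp: power_0_left)
  show "p * q * inverse (p*q) = 1" by (rule right_inverse) (use nz in simp)
  show r: "inverse (p*q) ^ d = 1" using p q by (simp add: power_inverse power_mult_distrib)
  show "p \<noteq> inverse (p*q)" using p r by auto
  show "q \<noteq> inverse (p*q)" using q r by auto
qed

lemma C0_eq:
  assumes d: "d \<ge> 1"
  shows "{p \<in> crit_points (folding_A2_R d). folding_A2_R d (fst p) (snd p) = 0}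
     = phi ` {S. S \<subseteq> {a. a^d = -1} \<and> card S = 2}"
proof
  show "{p \<in> crit_points (folding_A2_R d). folding_A2_R d (fst p) (snd p) = 0}
     \<subseteq> phi ` {S. S \<subseteq> {a. a^d = -1} \<and> card S = 2}"
  proof
    fix pt assume "pt \<in> {p \<in> crit_points (folding_A2_R d). folding_A2_R d (fst p) (snd p) = 0}"
    then obtain x y where pt: "pt = (x, y)" and C: "(x, y) \<in> crit_points (folding_A2_R d)"
      and F0: "folding_A2_R d x y = 0" by (cases pt) auto
    obtain a b c where e1: "x + \<i>*y = a+b+c" and e2: "x - \<i>*y = a*b+a*c+b*c" and e3: "a*b*c = 1"
      and dis: "a \<noteq> b" "a \<noteq> c" "b \<noteq> c" and p: "pat (a^d) (b^d) (c^d)"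
      and v: "folding_A2_R d x y = Vf (a^d) (b^d) (c^d)"
      using crit_obtain[OF d C] by blast
    have xy: "(x, y) = ptm (a+b+c) (a*b+a*c+b*c)" by (rule ptm_eq[OF e1 e2])
    have z: "zpat (a^d) (b^d) (c^d)" using pat_vals[OF p] v F0 by simp
    then consider "a^d = -1 \<and> b^d = -1 \<and> c^d = 1" | "a^d = -1 \<and> b^d = 1 \<and> c^d = -1"
      | "a^d = 1 \<and> b^d = -1 \<and> c^d = -1" unfolding zpat_def by blast
    then show "pt \<in> phi ` {S. S \<subseteq> {a. a^d = -1} \<and> card S = 2}"
    proof cases
      case 1
      have "phi {a, b} = pt" unfolding pt xy by (rule phi_pair[OF dis(1) e3])
      moreover have "{a, b} \<in> {S. S \<subseteq> {a. a^d = -1} \<and> card S = 2}" using 1 dis by auto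
      ultimately show ?thesis by blast
    next
      case 2
      have "phi {a, c} = ptm (a+c+b) (a*c+a*b+c*b)" by (rule phi_pair[OF dis(2)]) (use e3 in \<open>simp add: ac_simps\<close>)
      also have "\<dots> = pt" unfolding pt xy by (simp add: ac_simps)
      finally have "phi {a, c} = pt" .
      moreover have "{a, c} \<in> {S. S \<subseteq> {a. a^d = -1} \<and> card S = 2}" using 2 dis by auto
      ultimately show ?thesis by blast
    next
      case 3
      have "phi {b, c} = ptm (b+c+a) (b*c+b*a+c*a)" by (rule phi_pair[OF dis(3)]) (use e3 in \<open>simp add: ac_simps\<close>)
      also have "\<dots> = pt" unfolding pt xy by (simp add: ac_simps)
      finally have "phi {b, c} = pt" .
      moreover have "{b, c} \<in> {S. S \<subseteq> {a. a^d = -1} \<and> card S = 2}" using 3 dis by auto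
      ultimately show ?thesis by blast
    qed
  qed
next
  show "phi ` {S. S \<subseteq> {a. a^d = -1} \<and> card S = 2}
     \<subseteq> {p \<in> crit_points (folding_A2_R d). folding_A2_R d (fst p) (snd p) = 0}"
  proof
    fix pt assume "pt \<in> phi ` {S. S \<subseteq> {a. a^d = -1} \<and> card S = 2}"
    then obtain S where S: "S \<subseteq> {a. a^d = -1}" "card S = 2" and pt: "pt = phi S" by blast
    obtain p q where Spq: "S = {p, q}" and pq: "p \<noteq> q" using S(2) by (auto simp: card_2_iff)
    have pd: "p^d = -1" and qd: "q^d = -1" using S(1) Spq by auto
    define r where "r = inverse (p*q)"
    have f: "p*q*r = 1" "r^d = 1" "p \<noteq> r" "q \<noteq> r" using pair_facts[OF d pd qd] by (simp_all add: r_def)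
    obtain x y where xy: "pt = (x, y)" by (cases pt)
    have "(x, y) = ptm (p+q+r) (p*q+p*r+q*r)" using pt xy Spq phi_pair[OF pq f(1)] by simp
    then have e: "x + \<i>*y = p+q+r" "x - \<i>*y = p*q+p*r+q*r" using ptm_coords by blast+
    have C: "(x, y) \<in> crit_points (folding_A2_R d)"
      unfolding crit_char[OF e f(1) d] using pq f pd qd by (simp add: pat_def)
    have "folding_A2_R d x y = 0" unfolding val_char[OF e f(1) d] using pd qd f by (simp add: Vf_def)
    then show "pt \<in> {p \<in> crit_points (folding_A2_R d). folding_A2_R d (fst p) (snd p) = 0}"
      using C xy by simp
  qed
qed

lemma phi_inj:
  assumes d: "d \<ge> 1"
  shows "inj_on phi {S. S \<subseteq> {a. a^d = -1} \<and> card S = 2}"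
proof (rule inj_onI)
  fix S S' assume S: "S \<in> {S. S \<subseteq> {a. a^d = -1} \<and> card S = 2}"
    and S': "S' \<in> {S. S \<subseteq> {a. a^d = -1} \<and> card S = 2}" and eq: "phi S = phi S'"
  obtain p q where Spq: "S = {p, q}" and pq: "p \<noteq> q" using S by (auto simp: card_2_iff)
  obtain p' q' where Spq': "S' = {p', q'}" and pq': "p' \<noteq> q'" using S' by (auto simp: card_2_iff)
  have pd: "p^d = -1" and qd: "q^d = -1" using S Spq by auto
  have pd': "p'^d = -1" and qd': "q'^d = -1" using S' Spq' by auto
  define r where "r = inverse (p*q)"
  define r' where "r' = inverse (p'*q')"
  have f: "p*q*r = 1" "r^d = 1" using pair_facts[OF d pd qd] by (simp_all add: r_def)
  have f': "p'*q'*r' = 1" "r'^d = 1" using pair_facts[OF d pd' qd'] by (simp_all add: r'_def)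
  have "ptm (p+q+r) (p*q+p*r+q*r) = ptm (p'+q'+r') (p'*q'+p'*r'+q'*r')"
    using eq phi_pair[OF pq f(1)] phi_pair[OF pq' f'(1)] Spq Spq' by simp
  then have X: "p+q+r = p'+q'+r'" and Y: "p*q+p*r+q*r = p'*q'+p'*r'+q'*r'" using ptm_inj by blast+
  have "p' = p \<or> p' = q \<or> p' = r" by (rule same_roots[OF X Y f(1) f'(1)])
  moreover have "p' \<noteq> r" using pd' f(2) by auto
  ultimately have p'S: "p' \<in> S" using Spq by auto
  have X2: "p+q+r = q'+p'+r'" using X by (simp add: ac_simps)
  have Y2: "p*q+p*r+q*r = q'*p'+q'*r'+p'*r'" using Y by (simp add: ac_simps)
  have f2: "q'*p'*r' = 1" using f'(1) by (simp add: ac_simps)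
  have "q' = p \<or> q' = q \<or> q' = r" by (rule same_roots[OF X2 Y2 f(1) f2])
  moreover have "q' \<noteq> r" using qd' f(2) by auto
  ultimately have q'S: "q' \<in> S" using Spq by auto
  have "S' \<subseteq> S" using p'S q'S Spq' by auto
  moreover have "card S' = card S" using S S' by simp
  ultimately show "S = S'" using Spq by (metis card_subset_eq finite.emptyI finite.insertI)
qed

definition Om :: "complex set" where "Om = {r. r^2 + r + 1 = 0}"
definition om1 :: complex where "om1 = Complex (-1/2) (sqrt 3 / 2)"
definition om2 :: complex where "om2 = Complex (-1/2) (- (sqrt 3 / 2))"

lemma Om_eq: "Om = {om1, om2}"
proof -
  have s: "om1 + om2 = -1" by (simp add: om1_def om2_def complex_eq_iff)
  have p: "om1 * om2 = 1"
  proof -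
    have "sqrt 3 * sqrt 3 = (3::real)" by simp
    then show ?thesis by (simp add: om1_def om2_def complex_eq_iff algebra_simps)
  qed
  have "r^2 + r + 1 = (r - om1) * (r - om2)" for r
  proof -
    have "(r - om1) * (r - om2) = r^2 - (om1 + om2) * r + om1 * om2"
      by (simp add: algebra_simps power2_eq_square)
    then show ?thesis unfolding s p by simp
  qed
  then show ?thesis unfolding Om_def by auto
qed

lemma om12: "om1 \<noteq> om2"
  by (simp add: om1_def om2_def complex_eq_iff)

lemma card_Om: "card Om = 2" using om12 by (simp add: Om_eq)

lemma Om_facts:
  assumes "r \<in> Om"
  shows "r^3 = 1" "r \<noteq> 0" "inverse r = r * r" "inverse (r * r) = r" "r * r \<in> Om"
proof -
  have h: "r^2 + r + 1 = 0" using assms by (simp add: Om_def)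
  show r3: "r^3 = 1" by (rule cube1[OF h])
  then show "r \<noteq> 0" by auto
  show "inverse r = r * r" by (rule inverse_unique) (use r3 in \<open>simp add: power3_eq_cube mult.assoc\<close>)
  show "inverse (r * r) = r" by (rule inverse_unique) (use r3 in \<open>simp add: power3_eq_cube mult.assoc\<close>)
  have "(r*r)^2 + r*r + 1 = r^3 * r + r * r + 1" by (simp add: power2_eq_square power3_eq_cube algebra_simps)
  also have "\<dots> = r^2 + r + 1" using r3 by (simp add: power2_eq_square algebra_simps)
  finally show "r * r \<in> Om" using h by (simp add: Om_def)
qed

lemma one_notin_Om: "1 \<notin> Om" by (simp add: Om_def)

lemma pow_mod3:
  assumes "a*a*a = (1::complex)"
  shows "a^d = a^(d mod 3)"
proof -
  have "a^d = a^(3 * (d div 3) + d mod 3)" by simp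
  also have "\<dots> = (a^3)^(d div 3) * a^(d mod 3)" by (simp only: power_add power_mult)
  also have "\<dots> = a^(d mod 3)" using assms by (simp add: power3_eq_cube)
  finally show ?thesis .
qed

lemma Tset_eq: "{a. a^d \<in> Om \<and> a*a*a = 1} = (if d mod 3 = 0 then {} else Om)"
proof -
  consider "d mod 3 = 0" | "d mod 3 = 1" | "d mod 3 = 2" by arith
  then show ?thesis
  proof cases
    case 1
    have "a^d \<notin> Om" if "a*a*a = 1" for a :: complex using pow_mod3[OF that, of d] 1 one_notin_Om by simp
    then show ?thesis using 1 by auto
  next
    case 2
    have "a \<in> Om \<Longrightarrow> a*a*a = 1" for a :: complex using Om_facts(1)[of a] by (simp add: power3_eq_cube)
    moreover have "a*a*a = 1 \<Longrightarrow> a^d = a" for a :: complex using pow_mod3[of a d] 2 by simp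
    ultimately show ?thesis using 2 by auto
  next
    case 3
    have c: "a*a*a = 1" if "a \<in> Om" for a :: complex using Om_facts(1)[OF that] by (simp add: power3_eq_cube)
    have "a^d = a*a" if "a*a*a = 1" for a :: complex using pow_mod3[OF that, of d] 3 by (simp add: power2_eq_square)
    moreover have "a*a \<in> Om \<longleftrightarrow> a \<in> Om" if "a*a*a = 1" for a :: complex
    proof -
      have "(a*a)^2 + a*a + 1 = (a*a*a) * a + a * a + 1" by (simp add: power2_eq_square algebra_simps)
      also have "\<dots> = a^2 + a + 1" using that by (simp add: power2_eq_square algebra_simps)
      finally show ?thesis by (simp add: Om_def)
    qed
    ultimately show ?thesis using 3 c by auto
  qed
qed

lemma card_T: "card {a. a^d \<in> Om \<and> a*a*a = 1} = (if d mod 3 = 0 then 0 else 2)"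
  unfolding Tset_eq using card_Om by simp

lemma W_eq: "{a::complex. a^d \<in> Om} = {a. a^d = om1} \<union> {a. a^d = om2}"
  by (auto simp: Om_eq)

lemma card_W: "d \<ge> 1 \<Longrightarrow> card {a::complex. a^d \<in> Om} = 2 * d"
  and finite_W: "d \<ge> 1 \<Longrightarrow> finite {a::complex. a^d \<in> Om}"
proof -
  assume d: "d \<ge> 1"
  have n1: "om1 \<noteq> 0" "om2 \<noteq> 0" by (simp_all add: om1_def om2_def complex_eq_iff)
  have f: "finite {a::complex. a^d = om1}" "finite {a::complex. a^d = om2}" using d by (auto intro: finite_nth_roots)
  have c: "card {a::complex. a^d = om1} = d" "card {a::complex. a^d = om2} = d"
    using d n1 by (auto intro: card_nth_roots)
  have disj: "{a::complex. a^d = om1} \<inter> {a. a^d = om2} = {}" using om12 by auto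
  show "card {a::complex. a^d \<in> Om} = 2 * d" unfolding W_eq
    using card_Un_disjoint[OF f disj] c by simp
  show "finite {a::complex. a^d \<in> Om}" unfolding W_eq using f by simp
qed

definition Wd :: "nat \<Rightarrow> complex set" where "Wd d = {a. a^d \<in> Om}"
definition Ed :: "nat \<Rightarrow> (complex \<times> complex \<times> complex) set" where
  "Ed d = {(a,b,c). a \<in> Wd d \<and> b^d = a^d \<and> c = inverse (a*b)}"
definition Dd :: "nat \<Rightarrow> (complex \<times> complex \<times> complex) set" where
  "Dd d = {(a,b,c). (a,b,c) \<in> Ed d \<and> a \<noteq> b \<and> a \<noteq> c \<and> b \<noteq> c}"
definition N1 :: "nat \<Rightarrow> (complex \<times> complex \<times> complex) set" where
  "N1 d = (\<lambda>a. (a, a, inverse (a*a))) ` Wd d"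
definition N2 :: "nat \<Rightarrow> (complex \<times> complex \<times> complex) set" where
  "N2 d = (\<lambda>a. (a, inverse (a*a), a)) ` Wd d"
definition N3 :: "nat \<Rightarrow> (complex \<times> complex \<times> complex) set" where
  "N3 d = (\<lambda>b. (inverse (b*b), b, b)) ` Wd d"
definition Td :: "nat \<Rightarrow> (complex \<times> complex \<times> complex) set" where
  "Td d = (\<lambda>a. (a, a, a)) ` {a. a^d \<in> Om \<and> a*a*a = 1}"

lemma W_nz: "a \<in> Wd d \<Longrightarrow> a \<noteq> 0"
  using Om_facts(2)[of "a^d"] one_notin_Om by (cases "d = 0") (auto simp: Wd_def)

lemma Wd_facts:
  assumes "a \<in> Wd d"
  shows "inverse (a*a) \<in> Wd d" "inverse (a*a) ^ d = a^d"
proof -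
  have r: "a^d \<in> Om" using assms by (simp add: Wd_def)
  have "inverse (a*a) ^ d = inverse (a^d * a^d)" by (simp add: power_inverse power_mult_distrib)
  also have "\<dots> = a^d" using Om_facts(4)[OF r] .
  finally show "inverse (a*a) ^ d = a^d" .
  then show "inverse (a*a) \<in> Wd d" using r by (simp add: Wd_def)
qed

lemma card_E:
  assumes d: "d \<ge> 1"
  shows "card (Ed d) = 2 * d * d" "finite (Ed d)"
proof -
  have fW: "finite (Wd d)" using finite_W[OF d] by (simp add: Wd_def)
  have cW: "card (Wd d) = 2 * d" using card_W[OF d] by (simp add: Wd_def)
  have eq: "Ed d = (\<lambda>(a,b). (a, b, inverse (a*b))) ` (SIGMA a:Wd d. {b. b^d = a^d})"
    by (auto simp: Ed_def)
  have inj: "inj_on (\<lambda>(a,b). (a, b, inverse (a*b))) (SIGMA a:Wd d. {b. b^d = a^d})"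
    by (auto simp: inj_on_def)
  have fB: "\<forall>a\<in>Wd d. finite {b::complex. b^d = a^d}" using d by (auto intro: finite_nth_roots)
  have cB: "card {b::complex. b^d = a^d} = d" if "a \<in> Wd d" for a
    using W_nz[OF that] d by (intro card_nth_roots) auto
  have "card (Ed d) = card (SIGMA a:Wd d. {b. b^d = a^d})" unfolding eq by (rule card_image[OF inj])
  also have "\<dots> = (\<Sum>a\<in>Wd d. card {b::complex. b^d = a^d})" by (rule card_SigmaI[OF fW fB])
  also have "\<dots> = (\<Sum>a\<in>Wd d. d)" using cB by simp
  also have "\<dots> = 2 * d * d" using cW by simp
  finally show "card (Ed d) = 2 * d * d" .
  show "finite (Ed d)" unfolding eq using fW fB by auto
qed

lemma E_split: "Ed d = Dd d \<union> (N1 d \<union> N2 d \<union> N3 d)" and D_N_disj: "Dd d \<inter> (N1 d \<union> N2 d \<union> N3 d) = {}"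
proof -
  have N1E: "N1 d \<subseteq> Ed d" by (auto simp: N1_def Ed_def)
  have N2E: "N2 d \<subseteq> Ed d"
  proof
    fix t assume "t \<in> N2 d"
    then obtain a where a: "a \<in> Wd d" and t: "t = (a, inverse (a*a), a)" by (auto simp: N2_def)
    have "a = inverse (a * inverse (a*a))" using W_nz[OF a] by (simp add: field_simps)
    then show "t \<in> Ed d" using a Wd_facts[OF a] t by (simp add: Ed_def)
  qed
  have N3E: "N3 d \<subseteq> Ed d"
  proof
    fix t assume "t \<in> N3 d"
    then obtain b where b: "b \<in> Wd d" and t: "t = (inverse (b*b), b, b)" by (auto simp: N3_def)
    have "b = inverse (inverse (b*b) * b)" using W_nz[OF b] by (simp add: field_simps)
    then show "t \<in> Ed d" using b Wd_facts[OF b] t by (simp add: Ed_def)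
  qed
  have ED: "Ed d - Dd d \<subseteq> N1 d \<union> N2 d \<union> N3 d"
  proof
    fix t assume t: "t \<in> Ed d - Dd d"
    obtain a b c where tt: "t = (a, b, c)" by (cases t)
    have a: "a \<in> Wd d" and bd: "b^d = a^d" and c: "c = inverse (a*b)" using t tt by (auto simp: Ed_def)
    have nd: "a = b \<or> a = c \<or> b = c" using t tt by (auto simp: Dd_def)
    have a0: "a \<noteq> 0" by (rule W_nz[OF a])
    have ad: "a^d \<in> Om" using a by (simp add: Wd_def)
    have dn: "d \<noteq> 0"
    proof
      assume "d = 0"
      then show False using ad one_notin_Om by simp
    qed
    have "b^d \<noteq> 0" using bd Om_facts(2)[OF ad] by simp
    then have b0: "b \<noteq> 0" using dn by auto
    show "t \<in> N1 d \<union> N2 d \<union> N3 d"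
    proof (cases "a = b")
      case True
      then show ?thesis using a c tt by (auto simp: N1_def)
    next
      case False
      show ?thesis
      proof (cases "a = c")
        case True
        then have "b = inverse (a*a)" using c a0 b0 by (simp add: field_simps)
        then show ?thesis using a True tt by (auto simp: N2_def)
      next
        case False
        then have bc: "b = c" using nd \<open>a \<noteq> b\<close> by simp
        then have "a = inverse (b*b)" using c a0 b0 by (simp add: field_simps)
        moreover have "b \<in> Wd d" using a bd by (simp add: Wd_def)
        ultimately show ?thesis using bc tt by (auto simp: N3_def)
      qed
    qed
  qed
  have DE: "Dd d \<subseteq> Ed d" by (auto simp: Dd_def)
  show "Ed d = Dd d \<union> (N1 d \<union> N2 d \<union> N3 d)" using N1E N2E N3E ED DE by blast
  show "Dd d \<inter> (N1 d \<union> N2 d \<union> N3 d) = {}" by (auto simp: Dd_def N1_def N2_def N3_def)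
qed

lemma inv_sq_eq: "(a::complex) \<noteq> 0 \<Longrightarrow> inverse (a*a) = a \<longleftrightarrow> a*a*a = 1"
proof
  assume "a \<noteq> 0" "inverse (a*a) = a"
  then show "a*a*a = 1" by (metis mult.commute mult_eq_0_iff right_inverse)
next
  assume "a*a*a = 1"
  then show "inverse (a*a) = a" by (intro inverse_unique) (simp add: mult.assoc mult.commute)
qed

lemma N_inter: "N1 d \<inter> N2 d = Td d" "(N1 d \<union> N2 d) \<inter> N3 d = Td d"
proof -
  have T1: "Td d \<subseteq> N1 d" "Td d \<subseteq> N2 d" "Td d \<subseteq> N3 d"
  proof -
    have h: "a \<in> Wd d \<and> inverse (a*a) = a" if "a^d \<in> Om" "a*a*a = 1" for a
      using that inv_sq_eq[of a] W_nz[of a d] by (simp add: Wd_def)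
    show "Td d \<subseteq> N1 d" unfolding Td_def N1_def using h by (auto simp: image_iff)
    show "Td d \<subseteq> N2 d" unfolding Td_def N2_def using h by (auto simp: image_iff)
    show "Td d \<subseteq> N3 d" unfolding Td_def N3_def using h by (auto simp: image_iff)
  qed
  have h2: "a^d \<in> Om \<and> a*a*a = 1" if "a \<in> Wd d" "inverse (a*a) = a" for a
    using that inv_sq_eq[of a] W_nz[of a d] by (simp add: Wd_def)
  have "N1 d \<inter> N2 d \<subseteq> Td d"
  proof
    fix t assume "t \<in> N1 d \<inter> N2 d"
    then obtain a a' where a: "a \<in> Wd d" "t = (a, a, inverse (a*a))" and a': "a' \<in> Wd d" "t = (a', inverse (a'*a'), a')"
      unfolding N1_def N2_def by blast
    then have "a' = a" "inverse (a*a) = a" by auto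
    then show "t \<in> Td d" using a h2[OF a(1)] unfolding Td_def by auto
  qed
  moreover have "N1 d \<inter> N3 d \<subseteq> Td d"
  proof
    fix t assume "t \<in> N1 d \<inter> N3 d"
    then obtain a a' where a: "a \<in> Wd d" "t = (a, a, inverse (a*a))" and a': "a' \<in> Wd d" "t = (inverse (a'*a'), a', a')"
      unfolding N1_def N3_def by blast
    then have "a' = a" "inverse (a*a) = a" by auto
    then show "t \<in> Td d" using a h2[OF a(1)] unfolding Td_def by auto
  qed
  moreover have "N2 d \<inter> N3 d \<subseteq> Td d"
  proof
    fix t assume "t \<in> N2 d \<inter> N3 d"
    then obtain a a' where a: "a \<in> Wd d" "t = (a, inverse (a*a), a)" and a': "a' \<in> Wd d" "t = (inverse (a'*a'), a', a')"
      unfolding N2_def N3_def by blast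
    then have "a' = a" "inverse (a*a) = a" by auto
    then show "t \<in> Td d" using a h2[OF a(1)] unfolding Td_def by auto
  qed
  ultimately show "N1 d \<inter> N2 d = Td d" "(N1 d \<union> N2 d) \<inter> N3 d = Td d" using T1 by blast+
qed

lemma card_N:
  assumes d: "d \<ge> 1"
  shows "card (N1 d \<union> N2 d \<union> N3 d) + 2 * (if d mod 3 = 0 then 0 else 2) = 6 * d"
    "finite (N1 d \<union> N2 d \<union> N3 d)"
proof -
  have fW: "finite (Wd d)" using finite_W[OF d] by (simp add: Wd_def)
  have cW: "card (Wd d) = 2 * d" using card_W[OF d] by (simp add: Wd_def)
  have c1: "card (N1 d) = 2 * d" unfolding N1_def cW[symmetric] by (rule card_image) (auto simp: inj_on_def)
  have c2: "card (N2 d) = 2 * d" unfolding N2_def cW[symmetric] by (rule card_image) (auto simp: inj_on_def)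
  have c3: "card (N3 d) = 2 * d" unfolding N3_def cW[symmetric] by (rule card_image) (auto simp: inj_on_def)
  have cT: "card (Td d) = (if d mod 3 = 0 then 0 else 2)" unfolding Td_def card_T[symmetric]
    by (rule card_image) (auto simp: inj_on_def)
  have f1: "finite (N1 d)" "finite (N2 d)" "finite (N3 d)" using fW by (simp_all add: N1_def N2_def N3_def)
  have u1: "card (N1 d) + card (N2 d) = card (N1 d \<union> N2 d) + card (Td d)"
    using card_Un_Int[OF f1(1) f1(2)] N_inter(1) by simp
  have u2: "card (N1 d \<union> N2 d) + card (N3 d) = card (N1 d \<union> N2 d \<union> N3 d) + card (Td d)"
    using card_Un_Int[of "N1 d \<union> N2 d" "N3 d"] f1 N_inter(2) by simp
  show "card (N1 d \<union> N2 d \<union> N3 d) + 2 * (if d mod 3 = 0 then 0 else 2) = 6 * d"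
    using u1 u2 c1 c2 c3 cT by simp
  show "finite (N1 d \<union> N2 d \<union> N3 d)" using f1 by simp
qed

lemma card_D:
  assumes d: "d \<ge> 1"
  shows "card (Dd d) + 6 * d = 2 * d * d + 2 * (if d mod 3 = 0 then 0 else 2)" "finite (Dd d)"
proof -
  have fE: "finite (Ed d)" using card_E[OF d] by simp
  have fD: "finite (Dd d)" using fE E_split by (metis finite_Un)
  have "card (Ed d) = card (Dd d) + card (N1 d \<union> N2 d \<union> N3 d)"
    using card_Un_disjoint[OF fD card_N(2)[OF d] D_N_disj] E_split by simp
  then show "card (Dd d) + 6 * d = 2 * d * d + 2 * (if d mod 3 = 0 then 0 else 2)"
    using card_E(1)[OF d] card_N(1)[OF d] by simp
  show "finite (Dd d)" by (rule fD)
qed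

definition psi :: "complex \<times> complex \<times> complex \<Rightarrow> complex \<times> complex" where
  "psi t = (case t of (a,b,c) \<Rightarrow> ptm (a+b+c) (a*b+a*c+b*c))"

lemma D_mem: "(a,b,c) \<in> Dd d \<longleftrightarrow> a^d \<in> Om \<and> b^d = a^d \<and> a*b*c = 1 \<and> a \<noteq> b \<and> a \<noteq> c \<and> b \<noteq> c"
proof
  assume h: "(a,b,c) \<in> Dd d"
  then have a: "a \<in> Wd d" and bd: "b^d = a^d" and c: "c = inverse (a*b)" and dis: "a \<noteq> b" "a \<noteq> c" "b \<noteq> c"
    by (auto simp: Dd_def Ed_def)
  have ad: "a^d \<in> Om" using a by (simp add: Wd_def)
  have dn: "d \<noteq> 0"
  proof
    assume "d = 0"
    then show False using ad one_notin_Om by simp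
  qed
  have "b^d \<noteq> 0" using bd Om_facts(2)[OF ad] by simp
  then have b0: "b \<noteq> 0" using dn by auto
  have a0: "a \<noteq> 0" by (rule W_nz[OF a])
  have "a*b*c = 1" unfolding c by (rule right_inverse) (use a0 b0 in simp)
  then show "a^d \<in> Om \<and> b^d = a^d \<and> a*b*c = 1 \<and> a \<noteq> b \<and> a \<noteq> c \<and> b \<noteq> c" using ad bd dis by simp
next
  assume h: "a^d \<in> Om \<and> b^d = a^d \<and> a*b*c = 1 \<and> a \<noteq> b \<and> a \<noteq> c \<and> b \<noteq> c"
  then have "c = inverse (a*b)" by (intro inverse_unique[symmetric]) simp
  then show "(a,b,c) \<in> Dd d" using h by (simp add: Dd_def Ed_def Wd_def)
qed

lemma C1_eq:
  assumes d: "d \<ge> 1"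
  shows "{p \<in> crit_points (folding_A2_R d). folding_A2_R d (fst p) (snd p) = -1} = psi ` Dd d"
proof
  show "{p \<in> crit_points (folding_A2_R d). folding_A2_R d (fst p) (snd p) = -1} \<subseteq> psi ` Dd d"
  proof
    fix pt assume "pt \<in> {p \<in> crit_points (folding_A2_R d). folding_A2_R d (fst p) (snd p) = -1}"
    then obtain x y where pt: "pt = (x, y)" and C: "(x, y) \<in> crit_points (folding_A2_R d)"
      and F: "folding_A2_R d x y = -1" by (cases pt) auto
    obtain a b c where e1: "x + \<i>*y = a+b+c" and e2: "x - \<i>*y = a*b+a*c+b*c" and e3: "a*b*c = 1"
      and dis: "a \<noteq> b" "a \<noteq> c" "b \<noteq> c" and p: "pat (a^d) (b^d) (c^d)"
      and v: "folding_A2_R d x y = Vf (a^d) (b^d) (c^d)"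
      using crit_obtain[OF d C] by blast
    have pv: "Vf (a^d) (b^d) (c^d) = -1 \<longleftrightarrow> (a^d = b^d \<and> b^d = c^d \<and> (a^d)^2 + a^d + 1 = 0)"
      using pat_vals[OF p] by blast
    have "Vf (a^d) (b^d) (c^d) = -1" using v F by simp
    then have z: "a^d = b^d \<and> b^d = c^d \<and> (a^d)^2 + a^d + 1 = 0" using pv by blast
    have z3: "(a^d)^2 + a^d + 1 = 0" using z by blast
    have om: "a^d \<in> Om" unfolding Om_def mem_Collect_eq by (rule z3)
    have "(a,b,c) \<in> Dd d" unfolding D_mem using om z e3 dis by metis
    moreover have "psi (a,b,c) = pt" unfolding psi_def pt using ptm_eq[OF e1 e2] by simp
    ultimately show "pt \<in> psi ` Dd d" by force
  qed
next
  show "psi ` Dd d \<subseteq> {p \<in> crit_points (folding_A2_R d). folding_A2_R d (fst p) (snd p) = -1}"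
  proof
    fix pt assume "pt \<in> psi ` Dd d"
    then obtain a b c where t: "(a,b,c) \<in> Dd d" and pt: "pt = psi (a,b,c)" by auto
    have h: "a^d \<in> Om" "b^d = a^d" "a*b*c = 1" "a \<noteq> b" "a \<noteq> c" "b \<noteq> c" using t unfolding D_mem by auto
    have "a^d * b^d * c^d = (a*b*c)^d" by (simp add: power_mult_distrib)
    then have "(a^d * a^d) * c^d = 1" using h by simp
    then have "c^d = inverse (a^d * a^d)" by (intro inverse_unique[symmetric]) (simp add: mult.commute)
    then have cd: "c^d = a^d" using Om_facts(4)[OF h(1)] by simp
    obtain x y where xy: "pt = (x, y)" by (cases pt)
    have "(x, y) = ptm (a+b+c) (a*b+a*c+b*c)" using pt xy by (simp add: psi_def)
    then have e: "x + \<i>*y = a+b+c" "x - \<i>*y = a*b+a*c+b*c" using ptm_coords by blast+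
    have om: "(a^d)^2 + a^d + 1 = 0" using h(1) by (simp add: Om_def)
    have C: "(x, y) \<in> crit_points (folding_A2_R d)"
      unfolding crit_char[OF e h(3) d] using h cd om by (simp add: pat_def)
    have "folding_A2_R d x y = -1" unfolding val_char[OF e h(3) d] h(2) cd by (rule case1_val[OF om])
    then show "pt \<in> {p \<in> crit_points (folding_A2_R d). folding_A2_R d (fst p) (snd p) = -1}"
      using C xy by simp
  qed
qed

lemma fiber6:
  assumes d: "d \<ge> 1" and pt: "pt \<in> psi ` Dd d"
  shows "card {t \<in> Dd d. psi t = pt} = 6"
proof -
  obtain a b c where t: "(a,b,c) \<in> Dd d" and pt: "pt = psi (a,b,c)" using pt by auto
  have h: "a^d \<in> Om" "b^d = a^d" "a*b*c = 1" "a \<noteq> b" "a \<noteq> c" "b \<noteq> c" using t unfolding D_mem by auto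
  have "a^d * b^d * c^d = (a*b*c)^d" by (simp add: power_mult_distrib)
  then have "(a^d * a^d) * c^d = 1" using h by simp
  then have "c^d = inverse (a^d * a^d)" by (intro inverse_unique[symmetric]) (simp add: mult.commute)
  then have cd: "c^d = a^d" using Om_facts(4)[OF h(1)] by simp
  have eq: "{t \<in> Dd d. psi t = pt} = {(a,b,c),(a,c,b),(b,a,c),(b,c,a),(c,a,b),(c,b,a)}"
  proof
    show "{t \<in> Dd d. psi t = pt} \<subseteq> {(a,b,c),(a,c,b),(b,a,c),(b,c,a),(c,a,b),(c,b,a)}"
    proof
      fix t assume ht: "t \<in> {t \<in> Dd d. psi t = pt}"
      obtain a' b' c' where tt: "t = (a',b',c')" by (cases t)
      have tD: "(a',b',c') \<in> Dd d" using ht tt by simp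
      have h': "a'*b'*c' = 1" "a' \<noteq> b'" "a' \<noteq> c'" "b' \<noteq> c'" using tD[unfolded D_mem] by auto
      have "ptm (a'+b'+c') (a'*b'+a'*c'+b'*c') = ptm (a+b+c) (a*b+a*c+b*c)"
        using ht tt pt by (simp add: psi_def)
      then have X: "a+b+c = a'+b'+c'" and Y: "a*b+a*c+b*c = a'*b'+a'*c'+b'*c'" using ptm_inj by metis+
      have ra: "a' = a \<or> a' = b \<or> a' = c" by (rule same_roots[OF X Y h(3) h'(1)])
      have X2: "a+b+c = b'+a'+c'" using X by (simp add: ac_simps)
      have Y2: "a*b+a*c+b*c = b'*a'+b'*c'+a'*c'" using Y by (simp add: ac_simps)
      have rb: "b' = a \<or> b' = b \<or> b' = c" by (rule same_roots[OF X2 Y2 h(3)]) (use h'(1) in \<open>simp add: ac_simps\<close>)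
      have X3: "a+b+c = c'+a'+b'" using X by (simp add: ac_simps)
      have Y3: "a*b+a*c+b*c = c'*a'+c'*b'+a'*b'" using Y by (simp add: ac_simps)
      have rc: "c' = a \<or> c' = b \<or> c' = c" by (rule same_roots[OF X3 Y3 h(3)]) (use h'(1) in \<open>simp add: ac_simps\<close>)
      show "t \<in> {(a,b,c),(a,c,b),(b,a,c),(b,c,a),(c,a,b),(c,b,a)}"
        using ra rb rc h'(2-4) tt by auto
    qed
  next
    have inD: "(p,q,s) \<in> Dd d" if "p \<in> {a,b,c}" "q \<in> {a,b,c}" "s \<in> {a,b,c}" "p*q*s = 1"
      "p \<noteq> q" "p \<noteq> s" "q \<noteq> s" for p q s
    proof -
      have "p^d = a^d" "q^d = a^d" using that(1,2) h(2) cd by auto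
      then show ?thesis unfolding D_mem using that h(1) by simp
    qed
    have pp: "psi (p,q,s) = pt" if "p+q+s = a+b+c" "p*q+p*s+q*s = a*b+a*c+b*c" for p q s
      using that pt by (simp add: psi_def)
    show "{(a,b,c),(a,c,b),(b,a,c),(b,c,a),(c,a,b),(c,b,a)} \<subseteq> {t \<in> Dd d. psi t = pt}"
      using h(3-6) by (auto intro!: inD pp simp: ac_simps)
  qed
  show ?thesis unfolding eq using h(4-6) by auto
qed

lemma card_C1:
  assumes d: "d \<ge> 1"
  shows "card (Dd d) = 6 * card (psi ` Dd d)" "finite (psi ` Dd d)"
proof -
  have fD: "finite (Dd d)" using card_D(2)[OF d] .
  show fC: "finite (psi ` Dd d)" using fD by simp
  have U: "Dd d = (\<Union>pt\<in>psi ` Dd d. {t \<in> Dd d. psi t = pt})" by auto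
  have "card (Dd d) = (\<Sum>pt\<in>psi ` Dd d. card {t \<in> Dd d. psi t = pt})"
    by (subst U, rule card_UN_disjoint) (use fC fD in auto)
  also have "\<dots> = (\<Sum>pt\<in>psi ` Dd d. 6)" using fiber6[OF d] by simp
  also have "\<dots> = 6 * card (psi ` Dd d)" by simp
  finally show "card (Dd d) = 6 * card (psi ` Dd d)" .
qed

theorem lemma1:
  fixes d :: nat
  assumes "d \<ge> 1"
  defines "C \<equiv> crit_points (folding_A2_R d)"
  shows "(\<forall>(x, y) \<in> C. x \<in> \<real> \<and> y \<in> \<real>)
    \<and> finite {(x, y) \<in> C. folding_A2_R d x y = 0}
    \<and> card {(x, y) \<in> C. folding_A2_R d x y = 0} = d choose 2
    \<and> finite {(x, y) \<in> C. folding_A2_R d x y = -1}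
    \<and> real (card {(x, y) \<in> C. folding_A2_R d x y = -1}) =
        (if d mod 3 = 0 then real d ^ 2 / 3 - real d else real d ^ 2 / 3 - real d + 2 / 3)
    \<and> (\<forall>(x, y) \<in> C. folding_A2_R d x y \<noteq> 0 \<and> folding_A2_R d x y \<noteq> -1
          \<longrightarrow> folding_A2_R d x y = 8)"
proof -
  have d: "d \<ge> 1" by (rule assms(1))
  have S0: "{(x, y) \<in> C. folding_A2_R d x y = 0} = {p \<in> crit_points (folding_A2_R d). folding_A2_R d (fst p) (snd p) = 0}"
    unfolding C_def by auto
  have S1: "{(x, y) \<in> C. folding_A2_R d x y = -1} = {p \<in> crit_points (folding_A2_R d). folding_A2_R d (fst p) (snd p) = -1}"
    unfolding C_def by auto
  have P1: "\<forall>(x, y) \<in> C. x \<in> \<real> \<and> y \<in> \<real>" unfolding C_def using crit_real[OF d] by auto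
  have P4: "\<forall>(x, y) \<in> C. folding_A2_R d x y \<noteq> 0 \<and> folding_A2_R d x y \<noteq> -1 \<longrightarrow> folding_A2_R d x y = 8"
    unfolding C_def using crit_8[OF d] by auto
  have fR: "finite {a::complex. a^d = -1}" using d by (auto intro: finite_nth_roots)
  have cR: "card {a::complex. a^d = -1} = d" using d by (intro card_nth_roots) auto
  have fS2: "finite {S. S \<subseteq> {a::complex. a^d = -1} \<and> card S = 2}"
    by (rule finite_subset[of _ "Pow {a::complex. a^d = -1}"]) (use fR in auto)
  have P2: "finite {(x, y) \<in> C. folding_A2_R d x y = 0}" unfolding S0 C0_eq[OF d] using fS2 by simp
  have P3: "card {(x, y) \<in> C. folding_A2_R d x y = 0} = d choose 2"
    unfolding S0 C0_eq[OF d] card_image[OF phi_inj[OF d]] n_subsets[OF fR] cR ..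
  have P5: "finite {(x, y) \<in> C. folding_A2_R d x y = -1}" unfolding S1 C1_eq[OF d] by (rule card_C1(2)[OF d])
  have cc: "6 * card (psi ` Dd d) + 6 * d = 2 * d * d + 2 * (if d mod 3 = 0 then 0 else 2)"
    using card_D(1)[OF d] card_C1(1)[OF d] by simp
  have P6: "real (card {(x, y) \<in> C. folding_A2_R d x y = -1}) =
        (if d mod 3 = 0 then real d ^ 2 / 3 - real d else real d ^ 2 / 3 - real d + 2 / 3)"
  proof -
    have r: "6 * real (card (psi ` Dd d)) + 6 * real d = 2 * real d * real d + 2 * (if d mod 3 = 0 then 0 else 2)"
      using arg_cong[OF cc, of real] by (simp add: of_nat_mult)
    show ?thesis unfolding S1 C1_eq[OF d]
      using r by (cases "d mod 3 = 0") (simp_all add: field_simps power2_eq_square)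
  qed
  show ?thesis using P1 P2 P3 P5 P6 P4 by blast
qed

end
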